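(* Let $K$ be a field of characteristic $\neq 2$, let $n\ge 1$, and let $\mathcal C$ be an evolution algebra of a "chicken" population (EACP) over $K$ with natural basis $\{h_1,\dots,h_n,r\}$ and structural constants $a_{ij},b_i\in K$ ($i,j=1,\dots,n$). Then $\mathcal C$ is associative if and only if $$\sum_{j=1}^n a_{ij}a_{jk}=0\quad\text{and}\quad b_i=0\qquad\text{for all } i,k=1,\dots,n.$$
   Context: An EACP over a field $K$ (characteristic $\neq 2$) is a $K$-algebra $\mathcal C$ with a basis $\{h_1,\dots,h_n,r\}$ (called a natural basis) whose multiplication is determined by bilinearity from $$h_ir=rh_i=\tfrac12\Big(\sum_{j=1}^n a_{ij}h_j+b_ir\Big),\qquad h_ih_j=0\ (i,j=1,\dots,n),\qquad rr=0,$$ for some constants $a_{ij},b_i\in K$. The $n\times(n+1)$ matrix $M$ whose $i$-th row is $(a_{i1},\dots,a_{in},b_i)$ is called the matrix of structural constants. *)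

theory Defs
  imports Main
begin

text \<open>A finite-dimensional algebra over a field with basis e_0,...,e_N is
represented on coordinate vectors (functions nat => 'a vanishing outside {0..N}).
c i j k is the k-th coordinate of the product e_i e_j; the product is extended
bilinearly.\<close>

definition coord_space :: "nat \<Rightarrow> (nat \<Rightarrow> 'a::zero) set" where
  "coord_space N = {v. \<forall>k>N. v k = 0}"

definition alg_mult :: "nat \<Rightarrow> (nat \<Rightarrow> nat \<Rightarrow> nat \<Rightarrow> 'a::field)
    \<Rightarrow> (nat \<Rightarrow> 'a) \<Rightarrow> (nat \<Rightarrow> 'a) \<Rightarrow> (nat \<Rightarrow> 'a)" where
  "alg_mult N c x y = (\<lambda>k. if k \<le> N then (\<Sum>i\<le>N. \<Sum>j\<le>N. x i * y j * c i j k) else 0)"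

definition alg_associative :: "nat \<Rightarrow> (nat \<Rightarrow> nat \<Rightarrow> nat \<Rightarrow> 'a::field) \<Rightarrow> bool" where
  "alg_associative N c \<longleftrightarrow>
     (\<forall>x\<in>coord_space N. \<forall>y\<in>coord_space N. \<forall>z\<in>coord_space N.
        alg_mult N c (alg_mult N c x y) z = alg_mult N c x (alg_mult N c y z))"

text \<open>EACP with natural basis h_1..h_n, r: basis index i (1 <= i <= n) is h_i,
basis index 0 is r. Structural constants a i j, b i for i,j in {1..n}.
h_i r = r h_i = 1/2 (sum_j a_ij h_j + b_i r), h_i h_j = 0, r r = 0.\<close>

definition eacp_const :: "nat \<Rightarrow> (nat \<Rightarrow> nat \<Rightarrow> 'a) \<Rightarrow> (nat \<Rightarrow> 'a)
    \<Rightarrow> nat \<Rightarrow> nat \<Rightarrow> nat \<Rightarrow> 'a::field" where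
  "eacp_const n a b i j k =
     (if (1 \<le> i \<and> i \<le> n \<and> j = 0) \<or> (i = 0 \<and> 1 \<le> j \<and> j \<le> n) then
        (let l = max i j in
          if k = 0 then b l / 2 else if 1 \<le> k \<and> k \<le> n then a l k / 2 else 0)
      else 0)"

end

theory Submission
  imports Defs
begin

definition dd :: "(nat \<Rightarrow> nat \<Rightarrow> 'a) \<Rightarrow> (nat \<Rightarrow> 'a) \<Rightarrow> nat \<Rightarrow> nat \<Rightarrow> 'a::field" where
  "dd a b l k = (if k = 0 then b l else a l k)"

lemma mult_formula:
  fixes a :: "nat \<Rightarrow> nat \<Rightarrow> 'a::field"
  shows "alg_mult n (eacp_const n a b) x y k =
    (if k \<le> n then (\<Sum>l=1..n. (x l * y 0 + x 0 * y l) * dd a b l k / 2) else 0)"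
proof (cases "k \<le> n")
  case True
  have c0: "eacp_const n a b 0 j k = (if 1 \<le> j \<and> j \<le> n then dd a b j k / 2 else 0)" for j
    using True by (auto simp: eacp_const_def dd_def Let_def)
  have ci: "eacp_const n a b i j k = (if j = 0 then dd a b i k / 2 else 0)"
    if "1 \<le> i" "i \<le> n" for i j
    using True that by (auto simp: eacp_const_def dd_def Let_def)
  have split: "{..n} = insert 0 {1..n}" by auto
  have "(\<Sum>i\<le>n. \<Sum>j\<le>n. x i * y j * eacp_const n a b i j k)
      = (\<Sum>j\<le>n. x 0 * y j * eacp_const n a b 0 j k)
        + (\<Sum>i=1..n. \<Sum>j\<le>n. x i * y j * eacp_const n a b i j k)"
    by (simp add: split)
  also have "(\<Sum>j\<le>n. x 0 * y j * eacp_const n a b 0 j k) = (\<Sum>j=1..n. x 0 * y j * dd a b j k / 2)"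
    by (simp add: split c0)
  also have "(\<Sum>i=1..n. \<Sum>j\<le>n. x i * y j * eacp_const n a b i j k) = (\<Sum>i=1..n. x i * y 0 * dd a b i k / 2)"
    by (rule sum.cong) (simp_all add: split ci)
  finally show ?thesis using True
    by (simp add: alg_mult_def sum.distrib[symmetric] add_divide_distrib algebra_simps)
qed (simp add: alg_mult_def)

lemma mult_comm:
  fixes a :: "nat \<Rightarrow> nat \<Rightarrow> 'a::field"
  shows "alg_mult n (eacp_const n a b) x y = alg_mult n (eacp_const n a b) y x"
  by (rule ext) (simp add: mult_formula algebra_simps)

lemma mult_zero:
  fixes a :: "nat \<Rightarrow> nat \<Rightarrow> 'a::field"
  shows "alg_mult n (eacp_const n a b) (\<lambda>_. 0) y = (\<lambda>_. 0)"
  by (rule ext) (simp add: mult_formula)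

theorem mainTheorem1:
  fixes a :: "nat \<Rightarrow> nat \<Rightarrow> 'a::field" and b :: "nat \<Rightarrow> 'a" and n :: nat
  assumes "(2::'a) \<noteq> 0" and "n \<ge> 1"
  shows "alg_associative n (eacp_const n a b) \<longleftrightarrow>
    ((\<forall>i\<in>{1..n}. \<forall>k\<in>{1..n}. (\<Sum>j=1..n. a i j * a j k) = 0) \<and> (\<forall>i\<in>{1..n}. b i = 0))"
proof
  have four: "(4::'a) \<noteq> 0"
  proof -
    have "(4::'a) = 2 * 2" by simp
    then show ?thesis using assms(1) by (metis no_zero_divisors)
  qed
  let ?m = "alg_mult n (eacp_const n a b)"
  define e :: "nat \<Rightarrow> nat \<Rightarrow> 'a" where "e p = (\<lambda>k. if k = p then 1 else 0)" for p
  have ecs: "p \<le> n \<Longrightarrow> e p \<in> coord_space n" for p by (simp add: e_def coord_space_def)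
  assume A: "alg_associative n (eacp_const n a b)"
  have hb: "b i = 0" if i: "i \<in> {1..n}" for i
  proof -
    have F1: "?m (?m (e i) (e i)) (e 0) 0 = ?m (e i) (?m (e i) (e 0)) 0"
      using A ecs i unfolding alg_associative_def by simp
    have F2: "?m (e i) (e i) = (\<lambda>_. 0)"
      using i by (intro ext) (simp add: mult_formula e_def)
    have w: "?m (e i) (e 0) = (\<lambda>l. if l \<le> n then dd a b i l / 2 else 0)"
    proof (rule ext)
      fix l
      have "(\<Sum>l'=1..n. (e i l' * e 0 0 + e i 0 * e 0 l') * dd a b l' l / 2)
          = (\<Sum>l'=1..n. if l' = i then dd a b i l / 2 else 0)"
        using i by (intro sum.cong) (auto simp: e_def)
      also have "\<dots> = dd a b i l / 2" using i by (simp add: sum.delta)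
      finally show "?m (e i) (e 0) l = (if l \<le> n then dd a b i l / 2 else 0)"
        by (simp add: mult_formula)
    qed
    have "?m (e i) (?m (e i) (e 0)) 0 = (\<Sum>l'=1..n. (e i l' * (dd a b i 0 / 2) + e i 0 * (if l' \<le> n then dd a b i l' / 2 else 0)) * dd a b l' 0 / 2)"
      by (simp add: mult_formula w)
    also have "\<dots> = (\<Sum>l'=1..n. if l' = i then b i * b i / 4 else 0)"
      using i by (intro sum.cong) (auto simp: e_def dd_def)
    also have "\<dots> = b i * b i / 4" using i by (simp add: sum.delta)
    finally have F3: "?m (e i) (?m (e i) (e 0)) 0 = b i * b i / 4" .
    from F1 F2 F3 have "b i * b i / 4 = 0" by (metis mult_zero)
    then show ?thesis using four by (simp add: field_simps)
  qed
  moreover have "(\<Sum>j=1..n. a i j * a j k) = 0" if i: "i \<in> {1..n}" and k: "k \<in> {1..n}" for i k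
  proof -
    have G1: "?m (?m (e i) (e 0)) (e 0) k = ?m (e i) (?m (e 0) (e 0)) k"
      using A ecs i unfolding alg_associative_def by simp
    have G2: "?m (e 0) (e 0) = (\<lambda>_. 0)"
      by (intro ext) (simp add: mult_formula e_def)
    have G3: "?m (e i) (\<lambda>_. 0) = (\<lambda>_. 0)" using mult_comm mult_zero by metis
    have inner: "(\<Sum>la = Suc 0..n. (if la = i then 1 else 0) * a la l / (2::'a)) = a i l / 2" for l
      using i by (simp add: if_distrib[of "\<lambda>v. v * _"] if_distrib[of "\<lambda>v. v / _"] sum.delta cong: if_cong)
    have G4: "?m (?m (e i) (e 0)) (e 0) k = (\<Sum>j=1..n. a i j * a j k) / 4"
      using i k hb by (simp add: mult_formula e_def dd_def sum_divide_distrib inner)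
    have "(\<Sum>j=1..n. a i j * a j k) / 4 = 0" using G1 G2 G3 G4 by simp
    then show ?thesis using four by simp
  qed
  ultimately show "(\<forall>i\<in>{1..n}. \<forall>k\<in>{1..n}. (\<Sum>j=1..n. a i j * a j k) = 0) \<and> (\<forall>i\<in>{1..n}. b i = 0)"
    by blast
next
  let ?m = "alg_mult n (eacp_const n a b)"
  assume H: "(\<forall>i\<in>{1..n}. \<forall>k\<in>{1..n}. (\<Sum>j=1..n. a i j * a j k) = 0) \<and> (\<forall>i\<in>{1..n}. b i = 0)"
  have Z: "?m (?m x y) z = (\<lambda>_. 0)" for x y z
  proof (rule ext)
    fix k
    let ?P = "\<lambda>m. x m * y 0 + x 0 * y m"
    have w0: "?m x y 0 = 0" using H by (simp add: mult_formula dd_def)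
    have wl: "?m x y l = (\<Sum>m=1..n. ?P m * a m l / 2)" if "l \<in> {1..n}" for l
      using that by (simp add: mult_formula dd_def)
    show "?m (?m x y) z k = 0"
    proof (cases "k \<in> {1..n}")
      case False
      then show ?thesis using H by (auto simp: mult_formula dd_def)
    next
      case True
      have "?m (?m x y) z k = (\<Sum>l=1..n. (\<Sum>m=1..n. ?P m * a m l / 2) * z 0 * a l k / 2)"
        using True w0 wl by (simp add: mult_formula dd_def)
      also have "\<dots> = (\<Sum>l=1..n. \<Sum>m=1..n. (?P m * z 0 / 4) * (a m l * a l k))"
      proof (intro sum.cong refl)
        fix l
        have "(\<Sum>m=1..n. ?P m * a m l / 2) * z 0 * a l k / 2 = (\<Sum>m=1..n. ?P m * a m l / 2 * z 0 * a l k / 2)"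
          by (simp add: sum_distrib_right sum_divide_distrib)
        also have "\<dots> = (\<Sum>m=1..n. (?P m * z 0 / 4) * (a m l * a l k))"
        proof (intro sum.cong refl)
          fix m
          have "(4::'a) = 2 * 2" by simp
          then show "?P m * a m l / 2 * z 0 * a l k / 2 = (?P m * z 0 / 4) * (a m l * a l k)"
            by (simp add: divide_divide_eq_left mult_ac)
        qed
        finally show "(\<Sum>m=1..n. ?P m * a m l / 2) * z 0 * a l k / 2 = (\<Sum>m=1..n. (?P m * z 0 / 4) * (a m l * a l k))" .
      qed
      also have "\<dots> = (\<Sum>m=1..n. (?P m * z 0 / 4) * (\<Sum>l=1..n. a m l * a l k))"
        by (subst sum.swap) (simp add: sum_distrib_left)
      also have "\<dots> = 0" using H True by simp
      finally show ?thesis .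
    qed
  qed
  show "alg_associative n (eacp_const n a b)"
    unfolding alg_associative_def
  proof (intro ballI)
    fix x y z :: "nat \<Rightarrow> 'a"
    have "?m x (?m y z) = ?m (?m y z) x" by (rule mult_comm)
    then show "?m (?m x y) z = ?m x (?m y z)" using Z by simp
  qed
qed

end
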